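(* Let $n\ge3$, $\hat r\in\mathbb R^n$, $\delta\ge0$, $p\in[1,\infty]$, and let $q\in[1,\infty]$ be the dual exponent with $1/p+1/q=1$. Then for every $\pi\in\Delta_n$, $$\max_{\|\Delta\|_p\le\delta}\mathrm{Reg}(\pi,\hat r+\Delta)=\max_i\big\{\hat r_i-\langle\pi,\hat r\rangle+\delta\,b_{p,i}(\pi)\big\},\qquad b_{p,i}(\pi):=\|e_i-\pi\|_q.$$ Moreover, the following are equivalent: (a) for every $i$ there is a function $f_i$ with $b_{p,i}(\pi)=f_i(\pi_i)$ for all $\pi\in\Delta_n$; (b) $p\in\{1,\infty\}$. In these endpoint cases, $b_{1,i}(\pi)=1-\pi_i$ and $b_{\infty,i}(\pi)=2(1-\pi_i)$, and consequently $$\max_{\|\Delta\|_\infty\le\delta}\mathrm{Reg}(\pi,\hat r+\Delta)=2\delta+\max_i\{\hat r_i-2\delta\pi_i\}-\langle\pi,\hat r\rangle.$$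
   Context: $\Delta_n:=\{q\in\mathbb R^n_+:\sum_iq_i=1\}$; $e_i$ is the $i$-th standard basis vector. For $\pi\in\Delta_n$ and $s\in\mathbb R^n$, $\mathrm{Reg}(\pi,s):=\max_{\beta\in\Delta_n}\langle\beta-\pi,s\rangle$. *)

theory Defs
  imports "HOL-Analysis.Analysis"
begin

definition prob_simplex :: "(real ^ 'n) set" where
  "prob_simplex = {q. (\<forall>i. 0 \<le> q $ i) \<and> (\<Sum>i\<in>UNIV. q $ i) = 1}"

definition Reg :: "real ^ 'n \<Rightarrow> real ^ 'n \<Rightarrow> real" where
  "Reg \<pi> s = (SUP \<beta>\<in>prob_simplex. (\<beta> - \<pi>) \<bullet> s)"

definition pnorm :: "ereal \<Rightarrow> real ^ 'n \<Rightarrow> real" where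
  "pnorm p x = (if p = \<infinity> then Max (range (\<lambda>i. \<bar>x $ i\<bar>))
     else (\<Sum>i\<in>UNIV. \<bar>x $ i\<bar> powr real_of_ereal p) powr (1 / real_of_ereal p))"

definition dual_exp :: "ereal \<Rightarrow> ereal" where
  "dual_exp p = (if p = 1 then \<infinity> else if p = \<infinity> then 1
     else ereal (real_of_ereal p / (real_of_ereal p - 1)))"

definition bcoef :: "ereal \<Rightarrow> 'n \<Rightarrow> real ^ 'n \<Rightarrow> real" where
  "bcoef p i \<pi> = pnorm (dual_exp p) (axis i 1 - \<pi>)"

end

theory Submission imports Defs begin

lemma inner_vec_sum: "(x::real^'n) \<bullet> y = (\<Sum>j\<in>UNIV. x$j * y$j)"
  by (simp add: inner_vec_def)

lemma Max_range_eqI: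
  fixes g :: "'n::finite \<Rightarrow> real"
  assumes "\<And>i. g i \<le> m" "g k = m"
  shows "Max (range g) = m"
  by (rule Max_eqI) (use assms in auto)

lemma Max_range_ex:
  fixes g :: "'n::finite \<Rightarrow> real"
  obtains k where "Max (range g) = g k" "\<And>i. g i \<le> g k"
proof -
  have "Max (range g) \<in> range g" by (rule Max_in) auto
  then obtain k where k: "Max (range g) = g k" by blast
  have "g i \<le> g k" for i unfolding k[symmetric] by (rule Max_ge) auto
  with k that show ?thesis by blast
qed

lemma Max_range_add:
  fixes g :: "'n::finite \<Rightarrow> real"
  shows "Max (range (\<lambda>i. g i + c)) = Max (range g) + c"
proof -
  obtain k where "Max (range g) = g k" "\<And>i. g i \<le> g k" using Max_range_ex[of g] by blast
  then show ?thesis by (intro Max_range_eqI[of _ _ k]) auto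
qed

lemma axis_in_simplex: "axis k 1 \<in> prob_simplex"
proof -
  have "(\<Sum>i\<in>UNIV. axis k (1::real) $ i) = 1"
    by (simp add: axis_def)
  then show ?thesis by (auto simp: prob_simplex_def axis_def)
qed

lemma Reg_formula:
  fixes \<pi> s :: "real^'n"
  shows "Reg \<pi> s = Max (range (\<lambda>i. s$i)) - \<pi> \<bullet> s"
proof -
  obtain k where k: "Max (range (\<lambda>i. s$i)) = s$k" "\<And>i. s$i \<le> s$k" using Max_range_ex[of "\<lambda>i. s$i"] by blast
  have "Sup ((\<lambda>\<beta>. (\<beta> - \<pi>) \<bullet> s) ` prob_simplex) = s$k - \<pi> \<bullet> s"
  proof (rule cSup_eq_maximum)
    show "s $ k - \<pi> \<bullet> s \<in> (\<lambda>\<beta>. (\<beta> - \<pi>) \<bullet> s) ` prob_simplex"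
      using axis_in_simplex[of k]
      by (intro image_eqI[where x="axis k 1"]) (auto simp: inner_diff_left inner_commute[of "axis k 1"] inner_axis)
  next
    fix x assume "x \<in> (\<lambda>\<beta>. (\<beta> - \<pi>) \<bullet> s) ` prob_simplex"
    then obtain \<beta> where b: "\<beta> \<in> prob_simplex" and x: "x = (\<beta> - \<pi>) \<bullet> s" by auto
    have "\<beta> \<bullet> s = (\<Sum>j\<in>UNIV. \<beta>$j * s$j)" by (simp add: inner_vec_sum)
    also have "\<dots> \<le> (\<Sum>j\<in>UNIV. \<beta>$j * s$k)"
      using b k(2) by (intro sum_mono mult_left_mono) (auto simp: prob_simplex_def)
    also have "\<dots> = s$k" using b by (simp add: prob_simplex_def flip: sum_distrib_right)
    finally show "x \<le> s $ k - \<pi> \<bullet> s" using x by (simp add: inner_diff_left)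
  qed
  then show ?thesis using k unfolding Reg_def by simp
qed


definition pn :: "real \<Rightarrow> real^'n \<Rightarrow> real" where
  "pn P x = (\<Sum>j\<in>UNIV. \<bar>x$j\<bar> powr P) powr (1/P)"

lemma pn_nonneg: "pn P x \<ge> 0" by (simp add: pn_def)

lemma pn_powr: assumes "P > 0" shows "pn P x powr P = (\<Sum>j\<in>UNIV. \<bar>x$j\<bar> powr P)"
  using assms by (simp add: pn_def powr_powr sum_nonneg)

lemma pn_zero: assumes "pn P x = 0" shows "x$j = 0"
proof -
  have "(\<Sum>j\<in>UNIV. \<bar>x$j\<bar> powr P) = 0" using assms by (simp add: pn_def)
  then have "\<bar>x$j\<bar> powr P = 0" by (subst (asm) sum_nonneg_eq_0_iff) auto
  then show ?thesis by simp
qed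

lemma holder_sum:
  fixes a b :: "real^'n"
  assumes P: "P > 1" and Q: "Q > 1" and PQ: "1/P + 1/Q = 1"
  shows "(\<Sum>j\<in>UNIV. \<bar>a$j\<bar> * \<bar>b$j\<bar>) \<le> pn Q a * pn P b"
proof (cases "pn Q a = 0 \<or> pn P b = 0")
  case True
  then have "\<And>j. \<bar>a$j\<bar> * \<bar>b$j\<bar> = 0" using pn_zero by (metis abs_zero mult_zero_left mult_zero_right)
  then have "(\<Sum>j\<in>UNIV. \<bar>a$j\<bar> * \<bar>b$j\<bar>) = 0" by (intro sum.neutral) blast
  then show ?thesis by (simp add: pn_nonneg)
next
  case False
  define A where "A = pn Q a"
  define B where "B = pn P b"
  have A: "A > 0" and B: "B > 0" using False pn_nonneg[of Q a] pn_nonneg[of P b] by (auto simp: A_def B_def)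
  have "(\<Sum>j\<in>UNIV. (\<bar>a$j\<bar>/A) * (\<bar>b$j\<bar>/B)) \<le> (\<Sum>j\<in>UNIV. (\<bar>a$j\<bar>/A) powr Q / Q + (\<bar>b$j\<bar>/B) powr P / P)"
    by (intro sum_mono Youngs_inequality) (use P Q PQ A B in \<open>auto simp: add.commute\<close>)
  also have "\<dots> = (\<Sum>j\<in>UNIV. \<bar>a$j\<bar> powr Q) / A powr Q / Q + (\<Sum>j\<in>UNIV. \<bar>b$j\<bar> powr P) / B powr P / P"
    by (simp add: powr_divide sum.distrib sum_divide_distrib)
  also have "\<dots> = 1/Q + 1/P"
  proof -
    have e1: "A powr Q = (\<Sum>j\<in>UNIV. \<bar>a$j\<bar> powr Q)" using Q unfolding A_def by (simp add: pn_powr)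
    have e2: "B powr P = (\<Sum>j\<in>UNIV. \<bar>b$j\<bar> powr P)" using P unfolding B_def by (simp add: pn_powr)
    have "A powr Q > 0" "B powr P > 0" using A B by auto
    then show ?thesis by (simp flip: e1 e2)
  qed
  also have "\<dots> = 1" using PQ by simp
  finally have "(\<Sum>j\<in>UNIV. \<bar>a$j\<bar> * \<bar>b$j\<bar>) / (A * B) \<le> 1"
    by (simp add: sum_divide_distrib)
  then show ?thesis using A B by (simp add: A_def B_def)
qed

lemma inner_le_abs: "(x::real^'n) \<bullet> y \<le> (\<Sum>j\<in>UNIV. \<bar>x$j\<bar> * \<bar>y$j\<bar>)"
  unfolding inner_vec_sum by (intro sum_mono) (simp add: abs_mult[symmetric])

lemma holder_attain:
  fixes v :: "real^'n"
  assumes P: "P > 1" and Qdef: "Q = P / (P - 1)" and d: "\<delta> \<ge> 0"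
  shows "\<exists>\<Delta>. pn P \<Delta> \<le> \<delta> \<and> v \<bullet> \<Delta> = \<delta> * pn Q v"
proof (cases "pn Q v = 0")
  case True
  then show ?thesis using d by (intro exI[of _ 0]) (simp add: pn_def)
next
  case False
  define A where "A = pn Q v"
  have A: "A > 0" using False pn_nonneg[of Q v] by (simp add: A_def)
  have Q1: "Q > 1" using P by (simp add: Qdef)
  have QP: "(Q - 1) * P = Q" using P by (simp add: Qdef field_simps)
  define \<Delta> where "\<Delta> = (\<chi> j. \<delta> * sgn (v$j) * \<bar>v$j\<bar> powr (Q - 1) / A powr (Q - 1))"
  have absD: "\<bar>\<Delta>$j\<bar> = \<delta> * \<bar>v$j\<bar> powr (Q - 1) / A powr (Q - 1)" for j
    using d A by (cases "v$j = 0") (auto simp: \<Delta>_def abs_mult sgn_if)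
  have "\<bar>\<Delta>$j\<bar> powr P = \<delta> powr P * (\<bar>v$j\<bar> powr Q / A powr Q)" for j
    unfolding absD by (simp add: powr_divide powr_mult powr_powr QP d A less_imp_le)
  then have "(\<Sum>j\<in>UNIV. \<bar>\<Delta>$j\<bar> powr P) = \<delta> powr P * ((\<Sum>j\<in>UNIV. \<bar>v$j\<bar> powr Q) / A powr Q)"
    by (simp add: sum_distrib_left sum_divide_distrib)
  also have "\<dots> = \<delta> powr P"
  proof -
    have "A powr Q = (\<Sum>j\<in>UNIV. \<bar>v$j\<bar> powr Q)" using Q1 unfolding A_def by (simp add: pn_powr)
    moreover have "A powr Q > 0" using A by simp
    ultimately show ?thesis by simp
  qed
  finally have pnD: "pn P \<Delta> = \<delta>" using d P by (simp add: pn_def powr_powr)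
  have vD: "v$j * \<Delta>$j = \<delta> / A powr (Q - 1) * \<bar>v$j\<bar> powr Q" for j
  proof (cases "v$j = 0")
    case True then show ?thesis using Q1 by (simp add: \<Delta>_def)
  next
    case False
    have e: "\<bar>v$j\<bar> powr Q = \<bar>v$j\<bar> * \<bar>v$j\<bar> powr (Q - 1)"
      using powr_mult_base[of "\<bar>v$j\<bar>" "Q - 1"] by simp
    have "v$j * \<Delta>$j = \<delta> / A powr (Q - 1) * (\<bar>v$j\<bar> * \<bar>v$j\<bar> powr (Q - 1))"
      using False by (simp add: \<Delta>_def sgn_if abs_if)
    then show ?thesis by (simp only: e)
  qed
  from vD have "v \<bullet> \<Delta> = \<delta> / A powr (Q - 1) * (\<Sum>j\<in>UNIV. \<bar>v$j\<bar> powr Q)"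
    by (simp add: inner_vec_sum sum_distrib_left)
  also have "\<dots> = \<delta> / A powr (Q - 1) * A powr Q" using A Q1 unfolding A_def by (simp add: pn_powr)
  also have "A powr Q = A powr (Q - 1) * A" using A powr_mult_base[of A "Q - 1"] by (simp add: mult.commute)
  also have "\<delta> / A powr (Q - 1) * (A powr (Q - 1) * A) = \<delta> * A" using A by simp
  finally show ?thesis using \<open>pn P \<Delta> = \<delta>\<close> by (intro exI[of _ \<Delta>]) (simp add: A_def)
qed


lemma pnorm_1: "pnorm 1 x = (\<Sum>j\<in>UNIV. \<bar>x$j\<bar>)"
  by (simp add: pnorm_def)

lemma pnorm_inf: "pnorm \<infinity> x = Max (range (\<lambda>j. \<bar>x$j\<bar>))"
  by (simp add: pnorm_def)

lemma pnorm_real: "pnorm (ereal P) x = pn P x"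
  by (simp add: pnorm_def pn_def)

lemma dual_1: "dual_exp 1 = \<infinity>" by (simp add: dual_exp_def)
lemma dual_inf: "dual_exp \<infinity> = 1" by (simp add: dual_exp_def)
lemma dual_real: "P > 1 \<Longrightarrow> dual_exp (ereal P) = ereal (P / (P - 1))"
  by (simp add: dual_exp_def one_ereal_def)

lemma p_cases:
  assumes "1 \<le> (p::ereal)"
  obtains "p = 1" | "p = \<infinity>" | P where "p = ereal P" "P > 1"
proof (cases p)
  case (real r)
  then show ?thesis using that assms by (cases "r = 1") (auto simp: one_ereal_def)
qed (use that assms in auto)

lemma abs_le_Max: "\<bar>x$j\<bar> \<le> Max (range (\<lambda>j. \<bar>(x::real^'n)$j\<bar>))"
  by (rule Max_ge) auto

lemma duality:
  fixes v \<Delta> :: "real^'n" and p :: ereal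
  assumes p: "1 \<le> p" and d: "\<delta> \<ge> 0"
  shows "pnorm p \<Delta> \<le> \<delta> \<Longrightarrow> v \<bullet> \<Delta> \<le> \<delta> * pnorm (dual_exp p) v"
    and "\<exists>\<Delta>. pnorm p \<Delta> \<le> \<delta> \<and> v \<bullet> \<Delta> = \<delta> * pnorm (dual_exp p) v"
proof -
  assume D: "pnorm p \<Delta> \<le> \<delta>"
  have base: "v \<bullet> \<Delta> \<le> (\<Sum>j\<in>UNIV. \<bar>v$j\<bar> * \<bar>\<Delta>$j\<bar>)" by (rule inner_le_abs)
  from p show "v \<bullet> \<Delta> \<le> \<delta> * pnorm (dual_exp p) v"
  proof (cases rule: p_cases)
    case 1
    define M where "M = Max (range (\<lambda>j. \<bar>v$j\<bar>))"
    have M0: "M \<ge> 0" unfolding M_def using abs_le_Max[of v] by (meson abs_ge_zero order_trans)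
    have "(\<Sum>j\<in>UNIV. \<bar>v$j\<bar> * \<bar>\<Delta>$j\<bar>) \<le> (\<Sum>j\<in>UNIV. M * \<bar>\<Delta>$j\<bar>)"
      by (intro sum_mono mult_right_mono) (auto simp: M_def abs_le_Max)
    also have "\<dots> = M * pnorm p \<Delta>" using 1 by (simp add: pnorm_1 sum_distrib_left)
    also have "\<dots> \<le> M * \<delta>" using D M0 by (simp add: mult_left_mono)
    finally show ?thesis using base 1 by (simp add: dual_1 pnorm_inf M_def mult.commute)
  next
    case 2
    have "(\<Sum>j\<in>UNIV. \<bar>v$j\<bar> * \<bar>\<Delta>$j\<bar>) \<le> (\<Sum>j\<in>UNIV. \<bar>v$j\<bar> * \<delta>)"
      using D 2 abs_le_Max[of \<Delta>] by (intro sum_mono mult_left_mono) (auto simp: pnorm_inf intro: order_trans)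
    moreover have "(\<Sum>j\<in>UNIV. \<bar>v$j\<bar> * \<delta>) = \<delta> * pnorm (dual_exp p) v"
      using 2 by (simp add: dual_inf pnorm_1 sum_distrib_left mult.commute)
    ultimately show ?thesis using base by linarith
  next
    case (3 P)
    define Q where "Q = P / (P - 1)"
    have Q1: "Q > 1" using 3 by (simp add: Q_def)
    have PQ: "1/P + 1/Q = 1" using 3 by (simp add: Q_def field_simps)
    have "(\<Sum>j\<in>UNIV. \<bar>v$j\<bar> * \<bar>\<Delta>$j\<bar>) \<le> pn Q v * pn P \<Delta>"
      by (rule holder_sum) (use 3 Q1 PQ in auto)
    also have "\<dots> \<le> pn Q v * \<delta>" using D 3 by (intro mult_left_mono) (auto simp: pnorm_real pn_nonneg)
    finally show ?thesis using base 3 by (simp add: dual_real pnorm_real Q_def mult.commute)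
  qed
next
  from p show "\<exists>\<Delta>. pnorm p \<Delta> \<le> \<delta> \<and> v \<bullet> \<Delta> = \<delta> * pnorm (dual_exp p) v"
  proof (cases rule: p_cases)
    case 1
    obtain k where k: "Max (range (\<lambda>j. \<bar>v$j\<bar>)) = \<bar>v$k\<bar>"
      using Max_range_ex[of "\<lambda>j. \<bar>v$j\<bar>"] by blast
    define \<Delta> where "\<Delta> = axis k (\<delta> * sgn (v$k))"
    have "pnorm p \<Delta> = \<bar>\<delta> * sgn (v$k)\<bar>" using 1 by (simp add: pnorm_1 \<Delta>_def axis_def if_distrib[of abs] cong: if_cong)
    also have "\<dots> \<le> \<delta>" using d by (auto simp: abs_mult sgn_if)
    finally have a: "pnorm p \<Delta> \<le> \<delta>" .
    have "v \<bullet> \<Delta> = \<delta> * \<bar>v$k\<bar>" by (simp add: \<Delta>_def inner_axis sgn_if abs_if)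
    then show ?thesis using a 1 k by (intro exI[of _ \<Delta>]) (simp add: dual_1 pnorm_inf)
  next
    case 2
    define \<Delta> where "\<Delta> = (\<chi> j. \<delta> * sgn (v$j))"
    obtain k where k: "Max (range (\<lambda>j. \<bar>\<Delta>$j\<bar>)) = \<bar>\<Delta>$k\<bar>"
      using Max_range_ex[of "\<lambda>j. \<bar>\<Delta>$j\<bar>"] by blast
    have a: "pnorm p \<Delta> \<le> \<delta>" using 2 k d by (simp add: pnorm_inf \<Delta>_def abs_mult sgn_if)
    have "v \<bullet> \<Delta> = (\<Sum>j\<in>UNIV. \<delta> * \<bar>v$j\<bar>)"
      unfolding inner_vec_sum by (intro sum.cong) (auto simp: \<Delta>_def sgn_if abs_if)
    then show ?thesis using a 2 by (intro exI[of _ \<Delta>]) (simp add: dual_inf pnorm_1 sum_distrib_left)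
  next
    case (3 P)
    obtain \<Delta> where "pn P \<Delta> \<le> \<delta>" "v \<bullet> \<Delta> = \<delta> * pn (P / (P - 1)) v"
      using holder_attain[of P "P / (P - 1)" \<delta> v] 3 d by auto
    then show ?thesis using 3 by (intro exI[of _ \<Delta>]) (simp add: dual_real pnorm_real)
  qed
qed


lemma axis_inner: "axis j 1 \<bullet> (x::real^'n) = x$j"
  by (simp add: inner_commute[of "axis j 1"] inner_axis)

lemma robust:
  fixes r \<pi> :: "real^'n" and p :: ereal
  assumes p: "1 \<le> p" and d: "\<delta> \<ge> 0"
  defines "g \<equiv> (\<lambda>i. r $ i - \<pi> \<bullet> r + \<delta> * bcoef p i \<pi>)"
  shows "(\<exists>\<Delta>. pnorm p \<Delta> \<le> \<delta> \<and> Reg \<pi> (r + \<Delta>) = Max (range g)) \<and>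
         (\<forall>\<Delta>. pnorm p \<Delta> \<le> \<delta> \<longrightarrow> Reg \<pi> (r + \<Delta>) \<le> Max (range g))"
proof -
  have tm: "(r + \<Delta>)$j - \<pi> \<bullet> (r + \<Delta>) = (r$j - \<pi> \<bullet> r) + (axis j 1 - \<pi>) \<bullet> \<Delta>" for j \<Delta>
    by (simp add: inner_diff_left inner_add_right axis_inner)
  have gmax: "g i \<le> Max (range g)" for i by (rule Max_ge) auto
  have up: "Reg \<pi> (r + \<Delta>) \<le> Max (range g)" if D: "pnorm p \<Delta> \<le> \<delta>" for \<Delta>
  proof -
    obtain j where j: "Max (range (\<lambda>i. (r + \<Delta>)$i)) = (r + \<Delta>)$j"
      using Max_range_ex[of "\<lambda>i. (r + \<Delta>)$i"] by blast
    have "(axis j 1 - \<pi>) \<bullet> \<Delta> \<le> \<delta> * bcoef p j \<pi>"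
      unfolding bcoef_def by (rule duality(1)[OF p d D])
    then have "Reg \<pi> (r + \<Delta>) \<le> g j" unfolding Reg_formula j tm g_def by simp
    then show ?thesis using gmax[of j] by linarith
  qed
  obtain k where k: "Max (range g) = g k" using Max_range_ex[of g] by blast
  obtain \<Delta> where D: "pnorm p \<Delta> \<le> \<delta>" and vD: "(axis k 1 - \<pi>) \<bullet> \<Delta> = \<delta> * bcoef p k \<pi>"
    using duality(2)[OF p d, of "axis k 1 - \<pi>"] unfolding bcoef_def by blast
  have mk: "(r + \<Delta>)$k \<le> Max (range (\<lambda>i. (r + \<Delta>)$i))" by (rule Max_ge) auto
  have "g k \<le> Reg \<pi> (r + \<Delta>)" unfolding Reg_formula g_def
    using mk tm[where j=k and \<Delta>=\<Delta>] vD by linarith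
  then have "Reg \<pi> (r + \<Delta>) = Max (range g)" using up[OF D] k by linarith
  with D up show ?thesis by blast
qed

lemma simplex_le1:
  assumes "\<pi> \<in> prob_simplex" "i \<noteq> j"
  shows "\<pi>$i + \<pi>$j \<le> 1"
proof -
  have "(\<Sum>l\<in>{i,j}. \<pi>$l) \<le> (\<Sum>l\<in>UNIV. \<pi>$l)"
    using assms(1) by (intro sum_mono2) (auto simp: prob_simplex_def)
  then show ?thesis using assms by (simp add: prob_simplex_def)
qed

lemma simplex_le1': 
  assumes "\<pi> \<in> prob_simplex"
  shows "\<pi>$i \<le> 1"
proof -
  have "(\<Sum>l\<in>{i}. \<pi>$l) \<le> (\<Sum>l\<in>UNIV. \<pi>$l)"
    using assms(1) by (intro sum_mono2) (auto simp: prob_simplex_def)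
  then show ?thesis using assms by (simp add: prob_simplex_def)
qed

lemma bcoef_1:
  assumes "\<pi> \<in> prob_simplex"
  shows "bcoef 1 i \<pi> = 1 - \<pi>$i"
  unfolding bcoef_def dual_1 pnorm_inf
proof (rule Max_range_eqI[of _ _ i])
  fix j
  show "\<bar>(axis i 1 - \<pi>) $ j\<bar> \<le> 1 - \<pi> $ i"
    using assms simplex_le1[OF assms, of i j] simplex_le1'[OF assms, of i]
    by (cases "j = i") (auto simp: axis_def prob_simplex_def)
qed (use simplex_le1'[OF assms, of i] in \<open>simp add: axis_def\<close>)

lemma bcoef_inf:
  assumes "\<pi> \<in> prob_simplex"
  shows "bcoef \<infinity> i \<pi> = 2 * (1 - \<pi>$i)"
proof -
  have "bcoef \<infinity> i \<pi> = (\<Sum>j\<in>UNIV. \<bar>(axis i 1 - \<pi>) $ j\<bar>)"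
    unfolding bcoef_def dual_inf pnorm_1 ..
  also have "\<dots> = \<bar>(axis i 1 - \<pi>) $ i\<bar> + (\<Sum>j\<in>UNIV-{i}. \<bar>(axis i 1 - \<pi>) $ j\<bar>)"
    by (rule sum.remove) auto
  also have "(\<Sum>j\<in>UNIV-{i}. \<bar>(axis i 1 - \<pi>) $ j\<bar>) = (\<Sum>j\<in>UNIV-{i}. \<pi> $ j)"
    using assms by (intro sum.cong) (auto simp: axis_def prob_simplex_def)
  also have "\<dots> = 1 - \<pi>$i"
    using assms sum.remove[of UNIV i "\<lambda>j. \<pi>$j"] by (simp add: prob_simplex_def)
  also have "\<bar>(axis i 1 - \<pi>) $ i\<bar> = 1 - \<pi>$i"
    using simplex_le1'[OF assms, of i] by simp
  finally show ?thesis by simp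
qed


lemma sum3:
  fixes f :: "'n::finite \<Rightarrow> real"
  assumes "i \<noteq> j" "i \<noteq> k" "j \<noteq> k" "\<And>l. l \<notin> {i,j,k} \<Longrightarrow> f l = 0"
  shows "(\<Sum>l\<in>UNIV. f l) = f i + f j + f k"
proof -
  have "(\<Sum>l\<in>UNIV. f l) = (\<Sum>l\<in>{i,j,k}. f l)"
    using assms(4) by (intro sum.mono_neutral_right) auto
  then show ?thesis using assms by simp
qed

lemma three_elems:
  assumes "CARD('n) \<ge> 3"
  obtains i j k :: "'n::finite" where "i \<noteq> j" "i \<noteq> k" "j \<noteq> k"
proof -
  obtain i :: 'n where True by blast
  have "card (UNIV - {i}) \<ge> 2" using assms by (simp add: card_Diff_singleton)
  then obtain j where j: "j \<in> UNIV - {i}" by (metis all_not_in_conv card.empty not_numeral_le_zero)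
  have "card (UNIV - {i, j}) \<ge> 1" using assms j by (simp add: card_Diff_subset)
  then obtain k where k: "k \<in> UNIV - {i, j}" by (metis all_not_in_conv card.empty not_one_le_zero)
  show ?thesis using that j k by auto
qed

lemma not_fun:
  fixes p :: ereal
  assumes n3: "CARD('n::finite) \<ge> 3" and p: "1 \<le> p" and np: "p \<notin> {1, \<infinity>}"
  shows "\<not> (\<forall>i::'n. \<exists>f :: real \<Rightarrow> real. \<forall>\<pi>\<in>prob_simplex. bcoef p i \<pi> = f (\<pi> $ i))"
proof
  assume H: "\<forall>i::'n. \<exists>f :: real \<Rightarrow> real. \<forall>\<pi>\<in>prob_simplex. bcoef p i \<pi> = f (\<pi> $ i)"
  obtain P where pP: "p = ereal P" and P: "P > 1" using p np by (cases rule: p_cases) auto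
  define Q where "Q = P / (P - 1)"
  have Q1: "Q > 1" using P by (simp add: Q_def)
  have bc: "bcoef p i \<pi> = pn Q (axis i 1 - \<pi>)" for i \<pi>
    unfolding bcoef_def pP dual_real[OF P] pnorm_real Q_def ..
  obtain i j k :: 'n where ij: "i \<noteq> j" and ik: "i \<noteq> k" and jk: "j \<noteq> k" using three_elems[OF n3] by blast
  define \<pi>1 :: "real^'n" where "\<pi>1 = axis j 1"
  define \<pi>2 :: "real^'n" where "\<pi>2 = (\<chi> l. if l = j \<or> l = k then 1/2 else 0)"
  have s1: "\<pi>1 \<in> prob_simplex" unfolding \<pi>1_def by (rule axis_in_simplex)
  have "(\<Sum>l\<in>UNIV. \<pi>2 $ l) = 1"
    by (subst sum3[OF ij ik jk]) (use ij ik jk in \<open>auto simp: \<pi>2_def\<close>)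
  then have s2: "\<pi>2 \<in> prob_simplex" by (auto simp: prob_simplex_def \<pi>2_def)
  obtain f where f: "\<forall>\<pi>\<in>prob_simplex. bcoef p i \<pi> = f (\<pi> $ i)" using H by blast
  have "bcoef p i \<pi>1 = bcoef p i \<pi>2" using f s1 s2 ij ik by (simp add: \<pi>1_def \<pi>2_def axis_def)
  then have eq: "pn Q (axis i 1 - \<pi>1) powr Q = pn Q (axis i 1 - \<pi>2) powr Q" by (simp add: bc)
  have "pn Q (axis i 1 - \<pi>1) powr Q = 2"
    unfolding pn_powr[OF order.strict_trans[OF zero_less_one Q1]]
    by (subst sum3[OF ij ik jk]) (use ij ik jk in \<open>auto simp: \<pi>1_def axis_def\<close>)
  moreover have "pn Q (axis i 1 - \<pi>2) powr Q = 1 + 2 * (1/2) powr Q"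
    unfolding pn_powr[OF order.strict_trans[OF zero_less_one Q1]]
    by (subst sum3[OF ij ik jk]) (use ij ik jk in \<open>auto simp: \<pi>2_def axis_def\<close>)
  moreover have "(1/2::real) powr Q < (1/2) powr 1"
    by (rule powr_less_mono') (use Q1 in auto)
  ultimately show False using eq by simp
qed

theorem mainTheorem10:
  fixes r :: "real ^ 'n" and \<delta> :: real and p :: ereal
  assumes "CARD('n) \<ge> 3" and "\<delta> \<ge> 0" and "1 \<le> p"
  shows "(\<forall>\<pi>\<in>prob_simplex.
            (\<exists>\<Delta>. pnorm p \<Delta> \<le> \<delta> \<and>
               Reg \<pi> (r + \<Delta>) = Max (range (\<lambda>i. r $ i - \<pi> \<bullet> r + \<delta> * bcoef p i \<pi>))) \<and>
            (\<forall>\<Delta>. pnorm p \<Delta> \<le> \<delta> \<longrightarrow>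
               Reg \<pi> (r + \<Delta>) \<le> Max (range (\<lambda>i. r $ i - \<pi> \<bullet> r + \<delta> * bcoef p i \<pi>))))
       \<and> ((\<forall>i::'n. \<exists>f :: real \<Rightarrow> real. \<forall>\<pi>\<in>prob_simplex. bcoef p i \<pi> = f (\<pi> $ i))
            \<longleftrightarrow> p \<in> {1, \<infinity>})
       \<and> (\<forall>\<pi>::real^'n\<in>prob_simplex. \<forall>i. bcoef 1 i \<pi> = 1 - \<pi> $ i \<and> bcoef \<infinity> i \<pi> = 2 * (1 - \<pi> $ i))
       \<and> (\<forall>\<pi>\<in>prob_simplex.
            (\<exists>\<Delta>. pnorm \<infinity> \<Delta> \<le> \<delta> \<and>
               Reg \<pi> (r + \<Delta>) = 2 * \<delta> + Max (range (\<lambda>i. r $ i - 2 * \<delta> * \<pi> $ i)) - \<pi> \<bullet> r) \<and>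
            (\<forall>\<Delta>. pnorm \<infinity> \<Delta> \<le> \<delta> \<longrightarrow>
               Reg \<pi> (r + \<Delta>) \<le> 2 * \<delta> + Max (range (\<lambda>i. r $ i - 2 * \<delta> * \<pi> $ i)) - \<pi> \<bullet> r))"
proof (intro conjI)
  show "\<forall>\<pi>\<in>prob_simplex.
            (\<exists>\<Delta>. pnorm p \<Delta> \<le> \<delta> \<and>
               Reg \<pi> (r + \<Delta>) = Max (range (\<lambda>i. r $ i - \<pi> \<bullet> r + \<delta> * bcoef p i \<pi>))) \<and>
            (\<forall>\<Delta>. pnorm p \<Delta> \<le> \<delta> \<longrightarrow>
               Reg \<pi> (r + \<Delta>) \<le> Max (range (\<lambda>i. r $ i - \<pi> \<bullet> r + \<delta> * bcoef p i \<pi>)))"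
    using robust[OF assms(3) assms(2)] by blast
next
  show "(\<forall>i::'n. \<exists>f :: real \<Rightarrow> real. \<forall>\<pi>\<in>prob_simplex. bcoef p i \<pi> = f (\<pi> $ i))
            \<longleftrightarrow> p \<in> {1, \<infinity>}"
  proof
    assume "\<forall>i::'n. \<exists>f :: real \<Rightarrow> real. \<forall>\<pi>\<in>prob_simplex. bcoef p i \<pi> = f (\<pi> $ i)"
    then show "p \<in> {1, \<infinity>}" using not_fun[OF assms(1) assms(3)] by blast
  next
    assume "p \<in> {1, \<infinity>}"
    then show "\<forall>i::'n. \<exists>f :: real \<Rightarrow> real. \<forall>\<pi>\<in>prob_simplex. bcoef p i \<pi> = f (\<pi> $ i)"
    proof
      assume "p = 1"
      then show ?thesis using bcoef_1 by (intro allI exI[of _ "\<lambda>t. 1 - t"]) blast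
    next
      assume "p \<in> {\<infinity>}"
      then show ?thesis using bcoef_inf by (intro allI exI[of _ "\<lambda>t. 2 * (1 - t)"]) auto
    qed
  qed
next
  show "\<forall>\<pi>::real^'n\<in>prob_simplex. \<forall>i. bcoef 1 i \<pi> = 1 - \<pi> $ i \<and> bcoef \<infinity> i \<pi> = 2 * (1 - \<pi> $ i)"
    using bcoef_1 bcoef_inf by blast
next
  show "\<forall>\<pi>\<in>prob_simplex.
            (\<exists>\<Delta>. pnorm \<infinity> \<Delta> \<le> \<delta> \<and>
               Reg \<pi> (r + \<Delta>) = 2 * \<delta> + Max (range (\<lambda>i. r $ i - 2 * \<delta> * \<pi> $ i)) - \<pi> \<bullet> r) \<and>
            (\<forall>\<Delta>. pnorm \<infinity> \<Delta> \<le> \<delta> \<longrightarrow>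
               Reg \<pi> (r + \<Delta>) \<le> 2 * \<delta> + Max (range (\<lambda>i. r $ i - 2 * \<delta> * \<pi> $ i)) - \<pi> \<bullet> r)"
  proof
    fix \<pi> :: "real^'n" assume s: "\<pi> \<in> prob_simplex"
    have "(\<lambda>i. r $ i - \<pi> \<bullet> r + \<delta> * bcoef \<infinity> i \<pi>) = (\<lambda>i. (r $ i - 2 * \<delta> * \<pi> $ i) + (2 * \<delta> - \<pi> \<bullet> r))"
      by (rule ext) (simp add: bcoef_inf[OF s] algebra_simps)
    then have M: "Max (range (\<lambda>i. r $ i - \<pi> \<bullet> r + \<delta> * bcoef \<infinity> i \<pi>))
        = 2 * \<delta> + Max (range (\<lambda>i. r $ i - 2 * \<delta> * \<pi> $ i)) - \<pi> \<bullet> r"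
      by (simp only: Max_range_add)
    show "(\<exists>\<Delta>. pnorm \<infinity> \<Delta> \<le> \<delta> \<and>
               Reg \<pi> (r + \<Delta>) = 2 * \<delta> + Max (range (\<lambda>i. r $ i - 2 * \<delta> * \<pi> $ i)) - \<pi> \<bullet> r) \<and>
            (\<forall>\<Delta>. pnorm \<infinity> \<Delta> \<le> \<delta> \<longrightarrow>
               Reg \<pi> (r + \<Delta>) \<le> 2 * \<delta> + Max (range (\<lambda>i. r $ i - 2 * \<delta> * \<pi> $ i)) - \<pi> \<bullet> r)"
      unfolding M[symmetric] by (rule robust[OF _ assms(2)]) simp
  qed
qed

end
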